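(* Let $r\ge2$, $m\ge1$, $d,k\ge0$. Let $a_1,\dots,a_m\in\mathbb{R}[x_1,x_2]_k$ and $q_1,\dots,q_m\in\Sigma[x_1,x_2]_{2d}$, and let $p=\sum_{i=1}^m a_iq_i\in\mathbb{R}[x_1,x_2]_{2d+k}$. For $\mathbf{u}=(u_{ij})_{1\le i\le m,\,1\le j\le r}\in\mathbb{R}[x_1,x_2]_d^{m\times r}$ define $f^I_p(\mathbf{u})=\big\|\sum_{i=1}^m a_i\sum_{j=1}^r u_{ij}^2-p\big\|^2$. Then for every $\mathbf{u}$ with $\nabla f^I_p(\mathbf{u})=0$ and $\nabla^2 f^I_p(\mathbf{u})\succeq0$, we have $f^I_p(\mathbf{u})=0$.
   Context: $\mathbb{R}[x_1,x_2]_n$ denotes the space of real binary forms (homogeneous polynomials in $x_1,x_2$) of degree $n$, and $\Sigma[x_1,x_2]_{2d}$ the cone of sums of squares of binary forms of degree $d$. $\|\cdot\|$ is the norm induced by any fixed inner product on $\mathbb{R}[x_1,x_2]_{2d+k}$. Derivatives are taken with respect to the finite-dimensional real vector space $\mathbb{R}[x_1,x_2]_d^{m\times r}$: $\nabla f^I_p(\mathbf{u})=0$ means all first directional derivatives vanish, and $\nabla^2 f^I_p(\mathbf{u})\succeq0$ means all second directional derivatives are nonnegative. *)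

theory Defs
  imports "HOL-Analysis.Analysis" "HOL-Computational_Algebra.Polynomial"
begin

text \<open>Binary forms of degree n are encoded by dehomogenization
  F(x1,x2) \<mapsto> F(t,1): the space R[x1,x2]_n is identified with the real
  univariate polynomials of degree at most n. This identification is linear and
  multiplicative (a form of degree n times a form of degree n' is the form of
  degree n+n' corresponding to the product of the dehomogenizations).\<close>

definition is_form :: "nat \<Rightarrow> real poly \<Rightarrow> bool" where
  "is_form n f \<longleftrightarrow> degree f \<le> n"

definition sos_form :: "nat \<Rightarrow> real poly \<Rightarrow> bool" where
  "sos_form d q \<longleftrightarrow> (\<exists>gs :: real poly list. (\<forall>g\<in>set gs. is_form d g) \<and>
      q = sum_list (map (\<lambda>g. g ^ 2) gs))"

definition is_inner_product_on_forms :: "nat \<Rightarrow> (real poly \<Rightarrow> real poly \<Rightarrow> real) \<Rightarrow> bool" where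
  "is_inner_product_on_forms N ip \<longleftrightarrow>
     (\<forall>x y. is_form N x \<longrightarrow> is_form N y \<longrightarrow> ip x y = ip y x) \<and>
     (\<forall>x y z. is_form N x \<longrightarrow> is_form N y \<longrightarrow> is_form N z \<longrightarrow> ip (x + y) z = ip x z + ip y z) \<and>
     (\<forall>c x z. is_form N x \<longrightarrow> is_form N z \<longrightarrow> ip (smult c x) z = c * ip x z) \<and>
     (\<forall>x. is_form N x \<longrightarrow> x \<noteq> 0 \<longrightarrow> ip x x > 0)"

definition ip_norm :: "(real poly \<Rightarrow> real poly \<Rightarrow> real) \<Rightarrow> real poly \<Rightarrow> real" where
  "ip_norm ip e = sqrt (ip e e)"

definition fI :: "(real poly \<Rightarrow> real poly \<Rightarrow> real) \<Rightarrow> nat \<Rightarrow> nat \<Rightarrow> (nat \<Rightarrow> real poly)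
    \<Rightarrow> real poly \<Rightarrow> (nat \<Rightarrow> nat \<Rightarrow> real poly) \<Rightarrow> real" where
  "fI ip m r a p u = (ip_norm ip ((\<Sum>i<m. a i * (\<Sum>j<r. (u i j) ^ 2)) - p)) ^ 2"

definition is_form_matrix :: "nat \<Rightarrow> nat \<Rightarrow> nat \<Rightarrow> (nat \<Rightarrow> nat \<Rightarrow> real poly) \<Rightarrow> bool" where
  "is_form_matrix d m r u \<longleftrightarrow> (\<forall>i<m. \<forall>j<r. is_form d (u i j))"

definition line_pt :: "(nat \<Rightarrow> nat \<Rightarrow> real poly) \<Rightarrow> (nat \<Rightarrow> nat \<Rightarrow> real poly) \<Rightarrow> real
    \<Rightarrow> (nat \<Rightarrow> nat \<Rightarrow> real poly)" where
  "line_pt u v t = (\<lambda>i j. u i j + smult t (v i j))"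

end

theory Submission
  imports Defs "HOL-Computational_Algebra.Computational_Algebra" "HOL-Computational_Algebra.Field_as_Ring"
begin


definition linf :: "(real poly \<Rightarrow> real) \<Rightarrow> bool" where
  "linf \<psi> \<longleftrightarrow> (\<forall>f g. \<psi> (f + g) = \<psi> f + \<psi> g) \<and> (\<forall>c f. \<psi> (smult c f) = c * \<psi> f)"

lemma linf_add: "linf \<psi> \<Longrightarrow> \<psi> (f + g) = \<psi> f + \<psi> g"
  by (simp add: linf_def)
lemma linf_smult: "linf \<psi> \<Longrightarrow> \<psi> (smult c f) = c * \<psi> f"
  by (simp add: linf_def)
lemma linf_0: "linf \<psi> \<Longrightarrow> \<psi> 0 = 0"
  using linf_smult[of \<psi> 0 0] by simp
lemma linf_uminus: "linf \<psi> \<Longrightarrow> \<psi> (- f) = - \<psi> f"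
  using linf_smult[of \<psi> "-1" f] by simp
lemma linf_diff: "linf \<psi> \<Longrightarrow> \<psi> (f - g) = \<psi> f - \<psi> g"
  using linf_add[of \<psi> f "-g"] linf_uminus[of \<psi> g] by simp
lemma linf_sum: "linf \<psi> \<Longrightarrow> \<psi> (sum f A) = (\<Sum>x\<in>A. \<psi> (f x))"
  by (induction A rule: infinite_finite_induct) (auto simp: linf_0 linf_add)

lemma cover_one:
  fixes a b c :: "real poly"
  assumes cop: "coprime a b" and da: "degree a = D" and db: "degree b \<le> D" and Dd: "D \<le> d"
    and dc: "degree c \<le> d + D"
  shows "\<exists>w1 w2. degree w1 \<le> d \<and> degree w2 \<le> d \<and> c = a * w1 + b * w2"
proof (cases "a = 0")
  case True
  then have "is_unit b" using cop by simp
  then obtain \<beta> where b: "b = [:\<beta>:]" "\<beta> \<noteq> 0"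
    by (metis is_unit_polyE' monom_0)
  have D0: "D = 0" using da True by simp
  show ?thesis
    by (rule exI[of _ 0], rule exI[of _ "smult (1/\<beta>) c"]) (use b D0 dc in auto)
next
  case False
  obtain x y where xy: "x * a + y * b = 1"
    using bezout_coefficients_fst_snd[of a b] cop by (auto simp: coprime_iff_gcd_eq_1)
  define w2 where "w2 = (c * y) mod a"
  define q where "q = (c * y) div a"
  define w1 where "w1 = c * x + q * b"
  have cy: "c * y = q * a + w2" unfolding q_def w2_def by simp
  have ceq: "c = a * w1 + b * w2"
  proof -
    have "c = c * (x * a + y * b)" using xy by simp
    also have "\<dots> = a * (c * x) + b * (c * y)" by (simp add: algebra_simps)
    also have "\<dots> = a * w1 + b * w2" unfolding cy w1_def by (simp add: algebra_simps)
    finally show ?thesis .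
  qed
  have dw2: "degree w2 \<le> d"
    using degree_mod_less[OF False, of "c * y"] da Dd unfolding w2_def by auto
  have "degree (b * w2) \<le> d + D"
    using degree_mult_le[of b w2] db dw2 by simp
  then have "degree (c - b * w2) \<le> d + D"
    using degree_diff_le dc by blast
  moreover have "c - b * w2 = a * w1" using ceq by simp
  ultimately have "degree (a * w1) \<le> d + D" by simp
  then have dw1: "degree w1 \<le> d"
    using degree_mult_eq[OF False, of w1] da by (cases "w1 = 0") auto
  show ?thesis using dw1 dw2 ceq by blast
qed

lemma cover:
  fixes a b c :: "real poly"
  assumes cop: "coprime a b" and da: "degree a \<le> D" and db: "degree b \<le> D"
    and full: "degree a = D \<or> degree b = D" and Dd: "D \<le> d"
    and dc: "degree c \<le> d + D"
  shows "\<exists>w1 w2. degree w1 \<le> d \<and> degree w2 \<le> d \<and> c = a * w1 + b * w2"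
proof (cases "degree a = D")
  case True
  then show ?thesis using cover_one[OF cop True db Dd dc] by blast
next
  case False
  then have "degree b = D" using full by simp
  from cover_one[OF _ this da Dd dc] cop obtain w1 w2 where
    "degree w1 \<le> d" "degree w2 \<le> d" "c = b * w1 + a * w2"
    by (metis coprime_commute)
  then show ?thesis by (auto simp: add.commute)
qed

lemma order_X_pow: "order 0 ([:0, 1:] ^ k :: real poly) = k"
  using order_power_n_n[of "0::real" k] by simp

lemma core_full:
  fixes \<psi> :: "real poly \<Rightarrow> real" and u1 u2 s :: "real poly" and d :: nat
  assumes lin: "linf \<psi>"
    and du1: "degree u1 \<le> d" and du2: "degree u2 \<le> d"
    and full: "coeff u1 d \<noteq> 0 \<or> coeff u2 d \<noteq> 0"
    and G1: "\<And>w. degree w \<le> d \<Longrightarrow> \<psi> (u1 * w) = 0"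
    and G2: "\<And>w. degree w \<le> d \<Longrightarrow> \<psi> (u2 * w) = 0"
    and H1: "\<And>v1 v2. degree v1 \<le> d \<Longrightarrow> degree v2 \<le> d \<Longrightarrow> u1 * v1 + u2 * v2 = 0
               \<Longrightarrow> \<psi> (v1^2 + v2^2) \<ge> 0"
    and H2: "\<And>v1 v2 w1 w2. degree v1 \<le> d \<Longrightarrow> degree v2 \<le> d \<Longrightarrow> degree w1 \<le> d \<Longrightarrow> degree w2 \<le> d
               \<Longrightarrow> u1 * v1 + u2 * v2 = 0 \<Longrightarrow> \<psi> (v1^2 + v2^2) = 0 \<Longrightarrow> \<psi> (v1 * w1 + v2 * w2) = 0"
    and ds: "degree s \<le> d"
  shows "\<psi> (s^2) \<ge> 0"
proof -
  define g where "g = gcd u1 u2"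
  have unz: "u1 \<noteq> 0 \<or> u2 \<noteq> 0" using full by auto
  then have gnz: "g \<noteq> 0" unfolding g_def by auto
  define a where "a = u1 div g"
  define b where "b = u2 div g"
  have u1: "u1 = g * a" unfolding a_def g_def by simp
  have u2: "u2 = g * b" unfolding b_def g_def by simp
  have cop: "coprime a b" unfolding a_def b_def g_def using div_gcd_coprime[OF unz] .
  define n where "n = degree g"
  have nd: "n \<le> d"
  proof -
    have "g dvd u1" "g dvd u2" unfolding g_def by auto
    then show ?thesis using unz du1 du2 unfolding n_def
      by (meson dvd_imp_degree_le le_trans)
  qed
  define D where "D = d - n"
  have dd: "d = n + D" using nd unfolding D_def by simp
  have da: "degree a \<le> D"
  proof (cases "a = 0")
    case False
    then show ?thesis using du1 unfolding u1 D_def n_def using degree_mult_eq[OF gnz False] by simp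
  qed simp
  have db: "degree b \<le> D"
  proof (cases "b = 0")
    case False
    then show ?thesis using du2 unfolding u2 D_def n_def using degree_mult_eq[OF gnz False] by simp
  qed simp
  have fullab: "degree a = D \<or> degree b = D"
  proof (cases "coeff u1 d \<noteq> 0")
    case True
    then have "degree u1 = d" using du1 le_degree[of u1 d] by simp
    moreover have "a \<noteq> 0" using True u1 by auto
    ultimately show ?thesis unfolding u1 D_def n_def using degree_mult_eq[OF gnz] by auto
  next
    case False
    then have c2: "coeff u2 d \<noteq> 0" using full by simp
    then have "degree u2 = d" using du2 le_degree[of u2 d] by simp
    moreover have "b \<noteq> 0" using c2 u2 by auto
    ultimately show ?thesis unfolding u2 D_def n_def using degree_mult_eq[OF gnz] by auto
  qed
  have Dd: "D \<le> d" unfolding D_def by simp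
  define NN where "NN = a^2 + b^2"
  have dNN: "degree NN \<le> 2 * D"
  proof -
    have "degree (a^2) \<le> 2 * D" using degree_power_le[of a 2] da by linarith
    moreover have "degree (b^2) \<le> 2 * D" using degree_power_le[of b 2] db by linarith
    ultimately show ?thesis unfolding NN_def using degree_add_le by blast
  qed
  have NNroot: "poly NN z \<noteq> 0" for z
  proof
    assume "poly NN z = 0"
    then have "poly a z ^ 2 + poly b z ^ 2 = 0" unfolding NN_def by simp
    then have "poly a z = 0" "poly b z = 0" by (auto simp: add_nonneg_eq_0_iff)
    then have "[:-z, 1:] dvd a" "[:-z, 1:] dvd b" by (auto simp: poly_eq_0_iff_dvd)
    then have "is_unit [:-z, 1:]" using coprime_common_divisor[OF cop] by blast
    then show False by (simp add: is_unit_pCons_iff)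
  qed
  have NNnz: "NN \<noteq> 0" using NNroot[of 0] by auto
  have cov: "\<exists>w1 w2. degree w1 \<le> d \<and> degree w2 \<le> d \<and> c = a * w1 + b * w2"
    if "degree c \<le> d + D" for c
    using cover[OF cop da db fullab Dd that] .
  have B: "\<psi> (NN * h^2) \<ge> 0" if dh: "degree h \<le> n" for h
  proof -
    have "degree (b * h) \<le> d" using degree_mult_le[of b h] db dh dd by simp
    moreover have "degree (- (a * h)) \<le> d" using degree_mult_le[of a h] da dh dd by simp
    moreover have "u1 * (b * h) + u2 * (- (a * h)) = 0" unfolding u1 u2 by (simp add: algebra_simps)
    ultimately have "\<psi> ((b * h)^2 + (- (a * h))^2) \<ge> 0" using H1 by blast
    moreover have "(b * h)^2 + (- (a * h))^2 = NN * h^2" unfolding NN_def by (simp add: algebra_simps power2_eq_square)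
    ultimately show ?thesis by simp
  qed
  have C: "\<psi> (h * c) = 0" if dh: "degree h \<le> n" and z: "\<psi> (NN * h^2) = 0" and dc: "degree c \<le> d + D" for h c
  proof -
    obtain x y where xy: "degree x \<le> d" "degree y \<le> d" "c = a * x + b * y" using cov[OF dc] by blast
    have d1: "degree (b * h) \<le> d" using degree_mult_le[of b h] db dh dd by simp
    have d2: "degree (- (a * h)) \<le> d" using degree_mult_le[of a h] da dh dd by simp
    have k: "u1 * (b * h) + u2 * (- (a * h)) = 0" unfolding u1 u2 by (simp add: algebra_simps)
    have "(b * h)^2 + (- (a * h))^2 = NN * h^2" unfolding NN_def by (simp add: algebra_simps power2_eq_square)
    then have z': "\<psi> ((b * h)^2 + (- (a * h))^2) = 0" using z by simp
    have "degree (- x) \<le> d" using xy by simp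
    from H2[OF d1 d2 xy(2) this k z'] have "\<psi> (b * h * y + - (a * h) * - x) = 0" .
    moreover have "b * h * y + - (a * h) * - x = h * c" using xy(3) by (simp add: algebra_simps)
    ultimately show ?thesis by simp
  qed
  have kill0: "\<psi> (g * c) = 0" if dc: "degree c \<le> d + D" for c
  proof -
    obtain x y where xy: "degree x \<le> d" "degree y \<le> d" "c = a * x + b * y" using cov[OF dc] by blast
    have "g * c = u1 * x + u2 * y" unfolding u1 u2 xy(3) by (simp add: algebra_simps)
    then show ?thesis using G1[OF xy(1)] G2[OF xy(2)] linf_add[OF lin] by simp
  qed
  have main: "\<And>G. G \<noteq> 0 \<Longrightarrow> degree G = n \<Longrightarrow> n - order 0 G = \<mu> \<Longrightarrow>
      (\<And>c. degree c \<le> d + D \<Longrightarrow> \<psi> (G * c) = 0) \<Longrightarrow> \<psi> (s^2) \<ge> 0" for \<mu>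
  proof (induction \<mu> rule: less_induct)
    case (less \<mu> G)
    show ?case
    proof (cases "coprime G NN")
      case True
      obtain K M where KM: "K * G + M * NN = 1"
        using bezout_coefficients_fst_snd[of G NN] True by (auto simp: coprime_iff_gcd_eq_1)
      define h1 where "h1 = (s * a * M) mod G"
      define h2 where "h2 = (s * b * M) mod G"
      define q1 where "q1 = (s * a * M) div G"
      define q2 where "q2 = (s * b * M) div G"
      have h1e: "h1 = s * a * M - G * q1" unfolding h1_def q1_def by (simp add: mod_div_decomp algebra_simps)
      have h2e: "h2 = s * b * M - G * q2" unfolding h2_def q2_def by (simp add: mod_div_decomp algebra_simps)
      have dh1: "degree h1 \<le> n" using degree_mod_less[OF less.prems(1), of "s * a * M"] less.prems(2)
        unfolding h1_def by auto
      have dh2: "degree h2 \<le> n" using degree_mod_less[OF less.prems(1), of "s * b * M"] less.prems(2)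
        unfolding h2_def by auto
      define X where "X = 2 * K * s^2 - G * K^2 * s^2 + 2 * NN * s * M * (a*q1 + b*q2) - NN * G * (q1^2+q2^2)"
      have KM': "NN * M + K * G = 1" using KM by (simp add: algebra_simps)
      have eqX: "s^2 - NN * (h1^2 + h2^2) = G * X"
        using h1e h2e NN_def KM' unfolding X_def by algebra
      have dsq: "degree (s^2) \<le> 2 * d" using degree_power_le[of s 2] ds by simp
      have dNh: "degree (NN * h^2) \<le> 2 * d" if "degree h \<le> n" for h
      proof -
        have "degree (h^2) \<le> 2 * n" using degree_power_le[of h 2] that by simp
        then show ?thesis using degree_mult_le[of NN "h^2"] dNN dd by simp
      qed
      have "degree (NN * (h1^2 + h2^2)) \<le> 2 * d"
        using dNh[OF dh1] dNh[OF dh2] degree_add_le by (simp add: distrib_left)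
      then have "degree (G * X) \<le> 2 * d" using eqX dsq degree_diff_le by metis
      then have dX: "degree X \<le> d + D"
        using degree_mult_eq[OF less.prems(1), of X] less.prems(2) dd by (cases "X = 0") auto
      have "s^2 = NN * h1^2 + NN * h2^2 + G * X" using eqX by (simp add: algebra_simps)
      then have "\<psi> (s^2) = \<psi> (NN * h1^2) + \<psi> (NN * h2^2) + \<psi> (G * X)"
        using linf_add[OF lin] by simp
      also have "\<dots> = \<psi> (NN * h1^2) + \<psi> (NN * h2^2)" using less.prems(4)[OF dX] by simp
      also have "\<dots> \<ge> 0" using B[OF dh1] B[OF dh2] by simp
      finally show ?thesis .
    next
      case False
      define c where "c = gcd G NN"
      have cnz: "c \<noteq> 0" unfolding c_def using less.prems(1) by simp
      have "\<not> is_unit c" unfolding c_def using False is_unit_gcd by blast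
      then have kpos: "degree c \<ge> 1" using is_unit_iff_degree[OF cnz] by simp
      define k where "k = degree c"
      define G' where "G' = G div c"
      define NN' where "NN' = NN div c"
      have Ge: "G = c * G'" unfolding G'_def c_def by simp
      have Ne: "NN = c * NN'" unfolding NN'_def c_def by simp
      have G'nz: "G' \<noteq> 0" using Ge less.prems(1) by auto
      have NN'nz: "NN' \<noteq> 0" using Ne NNnz by auto
      have dG': "degree G' + k = n" using degree_mult_eq[OF cnz G'nz] Ge less.prems(2) k_def by simp
      have dNN': "degree NN' + k \<le> 2 * D" using degree_mult_eq[OF cnz NN'nz] Ne dNN k_def by simp
      define h where "h = G' * [:0, 1:] ^ k"
      have Xnz: "([:0, 1:] ^ k :: real poly) \<noteq> 0" by simp
      have hnz: "h \<noteq> 0" unfolding h_def using G'nz by simp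
      have dX: "degree ([:0, 1:] ^ k :: real poly) = k" by (simp add: degree_power_eq)
      have dh: "degree h = n" unfolding h_def using degree_mult_eq[OF G'nz Xnz] dX dG' by simp
      define cof where "cof = NN' * G' * ([:0, 1:] ^ k)^2"
      have "NN * h^2 = G * cof" unfolding cof_def h_def Ge Ne by (simp add: algebra_simps power2_eq_square)
      moreover have "degree cof \<le> d + D"
      proof -
        have "degree cof \<le> degree NN' + degree G' + 2 * k"
          unfolding cof_def using degree_mult_le[of "NN' * G'" "([:0, 1:] ^ k)^2"]
            degree_mult_le[of NN' G'] degree_power_le[of "[:0, 1:] ^ k :: real poly" 2] dX by simp
        then show ?thesis using dG' dNN' dd by simp
      qed
      ultimately have z: "\<psi> (NN * h^2) = 0" using less.prems(4) by simp
      have killh: "\<psi> (h * c') = 0" if "degree c' \<le> d + D" for c'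
        using C[OF _ z that] dh by simp
      have c0: "poly c 0 \<noteq> 0"
      proof
        assume "poly c 0 = 0"
        then have "poly NN 0 = 0" using Ne by simp
        then show False using NNroot by blast
      qed
      have oG: "order 0 G = order 0 G'"
        using order_mult[of c G' 0] Ge less.prems(1) order_0I[OF c0] by simp
      have oh: "order 0 h = order 0 G' + k"
        using order_mult[of G' "[:0, 1:] ^ k" 0] hnz order_X_pow[of k] unfolding h_def by simp
      have "order 0 G' \<le> degree G'" by (rule order_degree[OF G'nz])
      then have lt: "n - order 0 h < \<mu>" using oh oG less.prems(3) dG' kpos k_def by simp
      show ?thesis using less.IH[OF lt hnz dh refl killh] .
    qed
  qed
  show ?thesis using main[OF gnz n_def[symmetric] refl kill0] .
qed


definition rv :: "nat \<Rightarrow> real poly \<Rightarrow> real poly" where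
  "rv N f = (\<Sum>i\<le>N. monom (coeff f i) (N - i))"

lemma coeff_rv: "coeff (rv N f) j = (if j \<le> N then coeff f (N - j) else 0)"
proof -
  have "coeff (rv N f) j = (\<Sum>i\<le>N. if N - i = j then coeff f i else 0)"
    unfolding rv_def coeff_sum by simp
  also have "\<dots> = (\<Sum>i\<in>{..N} \<inter> {i. N - i = j}. coeff f i)"
    by (simp add: sum.inter_restrict)
  also have "{..N} \<inter> {i. N - i = j} = (if j \<le> N then {N - j} else {})"
    by auto
  finally show ?thesis by simp
qed

lemma degree_rv: "degree (rv N f) \<le> N"
  by (rule degree_le) (simp add: coeff_rv)

lemma rv_rv: "degree f \<le> N \<Longrightarrow> rv N (rv N f) = f"
  by (auto simp: poly_eq_iff coeff_rv coeff_eq_0)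

lemma rv_add: "rv N (f + g) = rv N f + rv N g"
  by (simp add: poly_eq_iff coeff_rv)

lemma rv_smult: "rv N (smult c f) = smult c (rv N f)"
  by (simp add: poly_eq_iff coeff_rv)

lemma rv_reflect: "degree f \<le> N \<Longrightarrow> rv N f = monom 1 (N - degree f) * reflect_poly f"
  by (auto simp: poly_eq_iff coeff_rv coeff_monom_mult coeff_reflect_poly coeff_eq_0)

lemma rv_mult:
  assumes "degree f \<le> N" "degree g \<le> M"
  shows "rv (N + M) (f * g) = rv N f * rv M g"
proof (cases "f = 0 \<or> g = 0")
  case True
  then show ?thesis by (auto simp: rv_def)
next
  case False
  then have fg: "f \<noteq> 0" "g \<noteq> 0" by auto
  have dfg: "degree (f * g) = degree f + degree g" using degree_mult_eq[OF fg] .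
  have "rv (N + M) (f * g) = monom 1 (N + M - degree (f * g)) * reflect_poly (f * g)"
    using assms dfg by (intro rv_reflect) simp
  also have "\<dots> = (monom 1 (N - degree f) * reflect_poly f) * (monom 1 (M - degree g) * reflect_poly g)"
    using assms dfg by (simp add: reflect_poly_mult mult_monom algebra_simps)
  also have "\<dots> = rv N f * rv M g" using assms by (simp add: rv_reflect)
  finally show ?thesis .
qed

definition Phi :: "nat \<Rightarrow> real \<Rightarrow> real poly \<Rightarrow> real poly" where
  "Phi N c f = rv N (pcompose f [:c, 1:])"

definition Phinv :: "nat \<Rightarrow> real \<Rightarrow> real poly \<Rightarrow> real poly" where
  "Phinv N c F = pcompose (rv N F) [:-c, 1:]"

lemma shift_inv1: "pcompose (pcompose f [:c, 1:]) [:-c, 1:] = (f :: real poly)"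
proof -
  have "pcompose [:c, 1:] [:-c, 1:] = ([:0, 1:] :: real poly)"
    by (simp add: pcompose_pCons)
  then show ?thesis by (metis pcompose_assoc pcompose_idR)
qed

lemma shift_inv2: "pcompose (pcompose f [:-c, 1:]) [:c, 1:] = (f :: real poly)"
  using shift_inv1[of f "-c"] by simp

lemma degree_shift: "degree (pcompose f [:c, 1:]) = degree (f :: real poly)"
  by (simp add: degree_pcompose)

lemma degree_Phi: "degree (Phi N c f) \<le> N"
  unfolding Phi_def by (rule degree_rv)

lemma degree_Phinv: "degree (Phinv N c f) \<le> N"
  unfolding Phinv_def using degree_rv[of N f] degree_shift[of _ "-c"] by simp

lemma Phinv_Phi: "degree f \<le> N \<Longrightarrow> Phinv N c (Phi N c f) = f"
  unfolding Phinv_def Phi_def by (simp add: rv_rv degree_shift shift_inv1)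

lemma Phi_Phinv: "degree F \<le> N \<Longrightarrow> Phi N c (Phinv N c F) = F"
  unfolding Phinv_def Phi_def using degree_shift[of "rv N F" "-c"] degree_rv[of N F]
  by (simp add: rv_rv shift_inv2)

lemma Phi_add: "Phi N c (f + g) = Phi N c f + Phi N c g"
  unfolding Phi_def by (simp add: pcompose_add rv_add)

lemma Phinv_add: "Phinv N c (f + g) = Phinv N c f + Phinv N c g"
  unfolding Phinv_def by (simp add: pcompose_add rv_add)

lemma Phinv_smult: "Phinv N c (smult a f) = smult a (Phinv N c f)"
  unfolding Phinv_def by (simp add: pcompose_smult rv_smult)

lemma Phi_mult: "degree f \<le> N \<Longrightarrow> degree g \<le> M \<Longrightarrow> Phi (N + M) c (f * g) = Phi N c f * Phi M c g"
  unfolding Phi_def by (simp add: pcompose_mult rv_mult degree_shift)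

lemma coeff_Phi_top: "coeff (Phi N c f) N = poly f c"
  unfolding Phi_def by (simp add: coeff_rv poly_0_coeff_0[symmetric] poly_pcompose)

lemma Phinv_0: "Phinv N c 0 = 0"
  unfolding Phinv_def by (simp add: rv_def)


lemma PP: "degree f \<le> d \<Longrightarrow> degree g \<le> d \<Longrightarrow> Phinv (d + d) c (Phi d c f * Phi d c g) = f * g"
proof -
  assume a: "degree f \<le> d" "degree g \<le> d"
  have "degree (f * g) \<le> d + d" using degree_mult_le[of f g] a by simp
  then show ?thesis using Phi_mult[OF a, of c] Phinv_Phi by metis
qed

lemma core_gen:
  fixes \<psi> :: "real poly \<Rightarrow> real" and u1 u2 s :: "real poly" and d :: nat
  assumes lin: "linf \<psi>"
    and du1: "degree u1 \<le> d" and du2: "degree u2 \<le> d"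
    and G1: "\<And>w. degree w \<le> d \<Longrightarrow> \<psi> (u1 * w) = 0"
    and G2: "\<And>w. degree w \<le> d \<Longrightarrow> \<psi> (u2 * w) = 0"
    and H1: "\<And>v1 v2. degree v1 \<le> d \<Longrightarrow> degree v2 \<le> d \<Longrightarrow> u1 * v1 + u2 * v2 = 0
               \<Longrightarrow> \<psi> (v1^2 + v2^2) \<ge> 0"
    and H2: "\<And>v1 v2 w1 w2. degree v1 \<le> d \<Longrightarrow> degree v2 \<le> d \<Longrightarrow> degree w1 \<le> d \<Longrightarrow> degree w2 \<le> d
               \<Longrightarrow> u1 * v1 + u2 * v2 = 0 \<Longrightarrow> \<psi> (v1^2 + v2^2) = 0 \<Longrightarrow> \<psi> (v1 * w1 + v2 * w2) = 0"
    and ds: "degree s \<le> d"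
  shows "\<psi> (s^2) \<ge> 0"
proof (cases "u1 = 0 \<and> u2 = 0")
  case True
  then show ?thesis using H1[OF ds, of 0] by simp
next
  case False
  obtain c where c: "poly u1 c \<noteq> 0 \<or> poly u2 c \<noteq> 0"
    using False poly_all_0_iff_0 by blast
  define \<psi>' where "\<psi>' F = \<psi> (Phinv (d + d) c F)" for F
  have lin': "linf \<psi>'"
    using lin unfolding linf_def \<psi>'_def by (simp add: Phinv_add Phinv_smult)
  define U1 where "U1 = Phi d c u1"
  define U2 where "U2 = Phi d c u2"
  have key: "\<psi>' (Phi d c f * Phi d c g) = \<psi> (f * g)" if "degree f \<le> d" "degree g \<le> d" for f g
    unfolding \<psi>'_def using PP[OF that] by simp
  have key2: "\<psi>' (Phi d c f1 * Phi d c g1 + Phi d c f2 * Phi d c g2) = \<psi> (f1 * g1 + f2 * g2)"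
    if "degree f1 \<le> d" "degree g1 \<le> d" "degree f2 \<le> d" "degree g2 \<le> d" for f1 g1 f2 g2
    unfolding \<psi>'_def using PP[OF that(1,2)] PP[OF that(3,4)] by (simp add: Phinv_add)
  have inv: "\<exists>w. degree w \<le> d \<and> W = Phi d c w" if "degree W \<le> d" for W
    using Phi_Phinv[OF that] degree_Phinv by (intro exI[of _ "Phinv d c W"]) simp
  have kerback: "u1 * v1 + u2 * v2 = 0" if "degree v1 \<le> d" "degree v2 \<le> d"
      "U1 * Phi d c v1 + U2 * Phi d c v2 = 0" for v1 v2
  proof -
    have "Phinv (d + d) c (U1 * Phi d c v1 + U2 * Phi d c v2) = u1 * v1 + u2 * v2"
      unfolding U1_def U2_def using PP[OF du1 that(1)] PP[OF du2 that(2)] by (simp add: Phinv_add)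
    then show ?thesis using that(3) by (simp add: Phinv_0)
  qed
  have "\<psi>' ((Phi d c s)^2) \<ge> 0"
  proof (rule core_full[OF lin', of U1 d U2])
    show "degree U1 \<le> d" "degree U2 \<le> d" unfolding U1_def U2_def by (rule degree_Phi)+
    show "coeff U1 d \<noteq> 0 \<or> coeff U2 d \<noteq> 0" unfolding U1_def U2_def coeff_Phi_top using c .
    show "degree (Phi d c s) \<le> d" by (rule degree_Phi)
    show "\<psi>' (U1 * W) = 0" if "degree W \<le> d" for W
      using inv[OF that] key[OF du1] G1 unfolding U1_def by auto
    show "\<psi>' (U2 * W) = 0" if "degree W \<le> d" for W
      using inv[OF that] key[OF du2] G2 unfolding U2_def by auto
    show "\<psi>' (V1^2 + V2^2) \<ge> 0" if VV: "degree V1 \<le> d" "degree V2 \<le> d" "U1 * V1 + U2 * V2 = 0" for V1 V2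
    proof -
      obtain v1 where v1: "degree v1 \<le> d" "V1 = Phi d c v1" using inv[OF VV(1)] by blast
      obtain v2 where v2: "degree v2 \<le> d" "V2 = Phi d c v2" using inv[OF VV(2)] by blast
      note v = v1 v2
      have "u1 * v1 + u2 * v2 = 0" using kerback v VV(3) by simp
      then have "\<psi> (v1 * v1 + v2 * v2) \<ge> 0" using H1 v by (simp add: power2_eq_square)
      then show ?thesis using key2[of v1 v1 v2 v2] v by (simp add: power2_eq_square)
    qed
    show "\<psi>' (V1 * W1 + V2 * W2) = 0" if VV: "degree V1 \<le> d" "degree V2 \<le> d" "degree W1 \<le> d" "degree W2 \<le> d"
      "U1 * V1 + U2 * V2 = 0" "\<psi>' (V1^2 + V2^2) = 0" for V1 V2 W1 W2
    proof -
      obtain v1 where v1: "degree v1 \<le> d" "V1 = Phi d c v1" using inv[OF VV(1)] by blast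
      obtain v2 where v2: "degree v2 \<le> d" "V2 = Phi d c v2" using inv[OF VV(2)] by blast
      obtain w1 where w1: "degree w1 \<le> d" "W1 = Phi d c w1" using inv[OF VV(3)] by blast
      obtain w2 where w2: "degree w2 \<le> d" "W2 = Phi d c w2" using inv[OF VV(4)] by blast
      note v = v1 v2 w1 w2
      have k: "u1 * v1 + u2 * v2 = 0" using kerback v VV(5) by simp
      have "\<psi> (v1 * v1 + v2 * v2) = 0" using VV(6) key2[of v1 v1 v2 v2] v by (simp add: power2_eq_square)
      then have "\<psi> (v1 * w1 + v2 * w2) = 0" using H2[OF v(1,3,5,7) k] by (simp add: power2_eq_square)
      then show ?thesis using key2[of v1 w1 v2 w2] v by simp
    qed
  qed
  then show ?thesis using key[OF ds ds] by (simp add: power2_eq_square)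
qed



lemma smult_sum_r: "smult c (sum f A) = (\<Sum>x\<in>A. smult c (f x :: real poly))"
  by (induction A rule: infinite_finite_induct) (auto simp: smult_add_right)

lemma deriv_poly_fun: "deriv (\<lambda>x. poly P x) = (\<lambda>x. poly (pderiv P) (x::real))"
  by (rule ext, rule DERIV_imp_deriv, rule poly_DERIV)

lemma sum_two:
  fixes r :: nat
  assumes "2 \<le> r" "\<And>j. j \<ge> 2 \<Longrightarrow> g j = (0::'a::comm_monoid_add)"
  shows "sum g {..<r} = g 0 + g 1"
  using assms(1)
proof (induction r rule: nat_induct_at_least)
  case base
  then show ?case by (simp add: numeral_2_eq_2)
next
  case (Suc n)
  then show ?case using assms(2)[of n] by simp
qed

context
  fixes N :: nat and ip :: "real poly \<Rightarrow> real poly \<Rightarrow> real"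
  assumes IP: "is_inner_product_on_forms N ip"
begin

lemma ip_sym: "degree x \<le> N \<Longrightarrow> degree y \<le> N \<Longrightarrow> ip x y = ip y x"
  using IP unfolding is_inner_product_on_forms_def is_form_def by blast
lemma ip_addL: "degree x \<le> N \<Longrightarrow> degree y \<le> N \<Longrightarrow> degree z \<le> N \<Longrightarrow> ip (x + y) z = ip x z + ip y z"
  using IP unfolding is_inner_product_on_forms_def is_form_def by blast
lemma ip_smultL: "degree x \<le> N \<Longrightarrow> degree z \<le> N \<Longrightarrow> ip (smult c x) z = c * ip x z"
  using IP unfolding is_inner_product_on_forms_def is_form_def by blast
lemma ip_pos: "degree x \<le> N \<Longrightarrow> x \<noteq> 0 \<Longrightarrow> ip x x > 0"
  using IP unfolding is_inner_product_on_forms_def is_form_def by blast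

lemma ip_addR: "degree x \<le> N \<Longrightarrow> degree y \<le> N \<Longrightarrow> degree z \<le> N \<Longrightarrow> ip z (x + y) = ip z x + ip z y"
  by (metis ip_addL ip_sym degree_add_le)
lemma ip_smultR: "degree x \<le> N \<Longrightarrow> degree z \<le> N \<Longrightarrow> ip z (smult c x) = c * ip z x"
  by (metis ip_smultL ip_sym degree_smult_le le_trans)
lemma ip_zeroL: "degree z \<le> N \<Longrightarrow> ip 0 z = 0"
  using ip_smultL[of 0 z 0] by simp
lemma ip_zeroR: "degree z \<le> N \<Longrightarrow> ip z 0 = 0"
  using ip_smultR[of 0 z 0] by simp
lemma ip_nonneg: "degree x \<le> N \<Longrightarrow> ip x x \<ge> 0"
  using ip_pos[of x] ip_zeroL[of 0] by (cases "x = 0") auto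
lemma ip_uminusR: "degree x \<le> N \<Longrightarrow> degree z \<le> N \<Longrightarrow> ip z (- x) = - ip z x"
  using ip_smultR[of x z "-1"] by simp
lemma ip_diffR: "degree x \<le> N \<Longrightarrow> degree y \<le> N \<Longrightarrow> degree z \<le> N \<Longrightarrow> ip z (x - y) = ip z x - ip z y"
  using ip_addR[of x "-y" z] ip_uminusR[of y z] by simp
lemma ip_sumR: "finite A \<Longrightarrow> (\<And>i. i \<in> A \<Longrightarrow> degree (f i) \<le> N) \<Longrightarrow> degree z \<le> N \<Longrightarrow>
    ip z (sum f A) = (\<Sum>i\<in>A. ip z (f i))"
proof (induction A rule: finite_induct)
  case empty
  then show ?case using ip_zeroR by simp
next
  case (insert x F)
  have "degree (sum f F) \<le> N" using insert by (intro degree_sum_le) auto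
  then show ?case using insert ip_addR[of "f x" "sum f F" z] by simp
qed

lemma ip_quad:
  assumes d0: "degree E0 \<le> N" and d1: "degree E1 \<le> N" and d2: "degree E2 \<le> N"
  shows "ip (E0 + smult t E1 + smult (t^2) E2) (E0 + smult t E1 + smult (t^2) E2) =
    poly [:ip E0 E0, 2 * ip E0 E1, ip E1 E1 + 2 * ip E0 E2, 2 * ip E1 E2, ip E2 E2:] t"
proof -
  define R where "R = E0 + smult t E1 + smult (t^2) E2"
  have s1: "degree (smult t E1) \<le> N" using d1 degree_smult_le le_trans by blast
  have s2: "degree (smult (t^2) E2) \<le> N" using d2 degree_smult_le le_trans by blast
  have s01: "degree (E0 + smult t E1) \<le> N" using d0 s1 degree_add_le by blast
  have dR: "degree R \<le> N" unfolding R_def using s01 s2 degree_add_le by blast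
  have "ip R R = ip E0 R + t * ip E1 R + t^2 * ip E2 R"
    unfolding R_def[of ] using ip_addL[OF s01 s2] ip_addL[OF d0 s1] ip_smultL d1 d2 dR
    by (simp add: R_def)
  moreover have "ip Z R = ip Z E0 + t * ip Z E1 + t^2 * ip Z E2" if "degree Z \<le> N" for Z
    unfolding R_def using ip_addR[OF s01 s2 that] ip_addR[OF d0 s1 that] ip_smultR d1 d2 that
    by simp
  moreover have "ip E1 E0 = ip E0 E1" "ip E2 E0 = ip E0 E2" "ip E2 E1 = ip E1 E2"
    using ip_sym d0 d1 d2 by auto
  ultimately show ?thesis unfolding R_def[symmetric] using d0 d1 d2
    by (simp add: algebra_simps power2_eq_square power3_eq_cube power4_eq_xxxx)
qed

end


definition E0f :: "nat \<Rightarrow> nat \<Rightarrow> (nat \<Rightarrow> real poly) \<Rightarrow> real poly \<Rightarrow> (nat \<Rightarrow> nat \<Rightarrow> real poly) \<Rightarrow> real poly" where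
  "E0f m r a p u = (\<Sum>i<m. a i * (\<Sum>j<r. (u i j)^2)) - p"
definition E1f :: "nat \<Rightarrow> nat \<Rightarrow> (nat \<Rightarrow> real poly) \<Rightarrow> (nat \<Rightarrow> nat \<Rightarrow> real poly) \<Rightarrow> (nat \<Rightarrow> nat \<Rightarrow> real poly) \<Rightarrow> real poly" where
  "E1f m r a u V = (\<Sum>i<m. a i * (\<Sum>j<r. smult 2 (u i j * V i j)))"
definition E2f :: "nat \<Rightarrow> nat \<Rightarrow> (nat \<Rightarrow> real poly) \<Rightarrow> (nat \<Rightarrow> nat \<Rightarrow> real poly) \<Rightarrow> real poly" where
  "E2f m r a V = (\<Sum>i<m. a i * (\<Sum>j<r. (V i j)^2))"

lemma sq_line: "(x + smult t y)^2 = x^2 + smult t (smult 2 (x * y)) + smult (t^2) (y^2 :: real poly)"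
proof -
  have "smult t (smult 2 (x * y)) = smult t (x * y) + smult t (x * y)"
    by (simp add: smult_add_left[symmetric] mult.commute)
  then show ?thesis by (simp add: power2_eq_square algebra_simps)
qed

lemma resid:
  "(\<Sum>i<m. a i * (\<Sum>j<r. (line_pt u V t i j)^2)) - p =
     E0f m r a p u + smult t (E1f m r a u V) + smult (t^2) (E2f m r a V)"
proof -
  have "(\<Sum>j<r. (line_pt u V t i j)^2) =
     (\<Sum>j<r. (u i j)^2) + smult t (\<Sum>j<r. smult 2 (u i j * V i j)) + smult (t^2) (\<Sum>j<r. (V i j)^2)" for i
    unfolding line_pt_def sq_line by (simp add: sum.distrib smult_sum_r)
  then have "a i * (\<Sum>j<r. (line_pt u V t i j)^2) =
     a i * (\<Sum>j<r. (u i j)^2) + smult t (a i * (\<Sum>j<r. smult 2 (u i j * V i j))) + smult (t^2) (a i * (\<Sum>j<r. (V i j)^2))" for i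
    by (simp add: distrib_left)
  then show ?thesis unfolding E0f_def E1f_def E2f_def by (simp add: sum.distrib smult_sum_r)
qed

lemma sos_deg: "sos_form d q \<Longrightarrow> degree q \<le> 2 * d"
proof -
  assume "sos_form d q"
  then obtain gs where gs: "\<forall>g\<in>set gs. degree g \<le> d" "q = sum_list (map (\<lambda>g. g^2) gs)"
    unfolding sos_form_def is_form_def by blast
  have "degree (sum_list (map (\<lambda>g. g^2) gs)) \<le> 2 * d" using gs(1)
  proof (induction gs)
    case (Cons g gs)
    have "degree (g^2) \<le> 2 * d" using degree_power_le[of g 2] Cons.prems by simp
    then show ?case using Cons degree_add_le by simp
  qed simp
  then show ?thesis using gs by simp
qed


lemma deriv_poly_fun': "deriv (poly P) = poly (pderiv (P :: real poly))"
  using deriv_poly_fun[of P] by simp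

definition Vblk :: "nat \<Rightarrow> (nat \<Rightarrow> real poly) \<Rightarrow> nat \<Rightarrow> nat \<Rightarrow> real poly" where
  "Vblk i W = (\<lambda>i' j'. if i' = i then W j' else 0)"

lemma E1_blk: "i < m \<Longrightarrow> E1f m r a u (Vblk i W) = a i * (\<Sum>j<r. smult 2 (u i j * W j))"
proof -
  assume im: "i < m"
  have "E1f m r a u (Vblk i W) = (\<Sum>i'<m. if i' = i then a i * (\<Sum>j<r. smult 2 (u i j * W j)) else 0)"
    unfolding E1f_def Vblk_def by (rule sum.cong) auto
  also have "\<dots> = a i * (\<Sum>j<r. smult 2 (u i j * W j))" using im by simp
  finally show ?thesis .
qed

lemma E2_blk: "i < m \<Longrightarrow> E2f m r a (Vblk i W) = a i * (\<Sum>j<r. (W j)^2)"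
proof -
  assume im: "i < m"
  have "E2f m r a (Vblk i W) = (\<Sum>i'<m. if i' = i then a i * (\<Sum>j<r. (W j)^2) else 0)"
    unfolding E2f_def Vblk_def by (rule sum.cong) auto
  also have "\<dots> = a i * (\<Sum>j<r. (W j)^2)" using im by simp
  finally show ?thesis .
qed

lemma Vblk_form: "(\<And>j. degree (W j) \<le> d) \<Longrightarrow> is_form_matrix d m r (Vblk i W)"
  unfolding is_form_matrix_def Vblk_def is_form_def by auto

context
  fixes r m d k :: nat and a q :: "nat \<Rightarrow> real poly" and p :: "real poly"
    and ip :: "real poly \<Rightarrow> real poly \<Rightarrow> real" and u :: "nat \<Rightarrow> nat \<Rightarrow> real poly"
  assumes r2: "r \<ge> 2"
    and ak: "\<forall>i<m. is_form k (a i)"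
    and qs: "\<forall>i<m. sos_form d (q i)"
    and pdef: "p = (\<Sum>i<m. a i * q i)"
    and IPa: "is_inner_product_on_forms (2 * d + k) ip"
    and um: "is_form_matrix d m r u"
    and grad: "\<forall>v. is_form_matrix d m r v \<longrightarrow>
                 deriv (\<lambda>t. fI ip m r a p (line_pt u v t)) 0 = 0"
    and hess: "\<forall>v. is_form_matrix d m r v \<longrightarrow>
                 deriv (deriv (\<lambda>t. fI ip m r a p (line_pt u v t))) 0 \<ge> 0"
begin

lemma dak: "i < m \<Longrightarrow> degree (a i) \<le> k" using ak unfolding is_form_def by auto
lemma dum: "i < m \<Longrightarrow> j < r \<Longrightarrow> degree (u i j) \<le> d" using um unfolding is_form_matrix_def is_form_def by auto

lemma deg_blocksum:
  assumes "\<And>i. i < m \<Longrightarrow> degree (X i) \<le> 2 * d"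
  shows "degree (\<Sum>i<m. a i * X i) \<le> 2 * d + k"
proof (rule degree_sum_le)
  fix i assume "i \<in> {..<m}"
  then show "degree (a i * X i) \<le> 2 * d + k"
    using degree_mult_le[of "a i" "X i"] dak[of i] assms[of i] by simp
qed simp

lemma deg_sq_sum:
  assumes "\<And>j. j < r \<Longrightarrow> degree (Y j) \<le> d" "\<And>j. j < r \<Longrightarrow> degree (Z j) \<le> d"
  shows "degree (\<Sum>j<r. Y j * Z j) \<le> 2 * d"
proof (rule degree_sum_le)
  fix j assume "j \<in> {..<r}"
  then show "degree (Y j * Z j) \<le> 2 * d"
    using degree_mult_le[of "Y j" "Z j"] assms[of j] by simp
qed simp

lemma dp: "degree p \<le> 2 * d + k"
  unfolding pdef by (rule deg_blocksum) (use qs sos_deg in auto)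

lemma dE0: "degree (E0f m r a p u) \<le> 2 * d + k"
proof -
  have "degree (\<Sum>i<m. a i * (\<Sum>j<r. (u i j)^2)) \<le> 2 * d + k"
    by (rule deg_blocksum) (use deg_sq_sum[of "u i" "u i" for i] dum in \<open>auto simp: power2_eq_square\<close>)
  then show ?thesis unfolding E0f_def using dp degree_diff_le by blast
qed

lemma dE1: "is_form_matrix d m r V \<Longrightarrow> degree (E1f m r a u V) \<le> 2 * d + k"
proof -
  assume V: "is_form_matrix d m r V"
  have "degree (\<Sum>j<r. smult 2 (u i j * V i j)) \<le> 2 * d" if "i < m" for i
  proof -
    have "degree (\<Sum>j<r. u i j * V i j) \<le> 2 * d"
      by (rule deg_sq_sum) (use V that dum in \<open>auto simp: is_form_matrix_def is_form_def\<close>)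
    then show ?thesis by (simp add: smult_sum_r[symmetric])
  qed
  then show ?thesis unfolding E1f_def by (intro deg_blocksum)
qed

lemma dE2: "is_form_matrix d m r V \<Longrightarrow> degree (E2f m r a V) \<le> 2 * d + k"
proof -
  assume V: "is_form_matrix d m r V"
  show ?thesis unfolding E2f_def
    by (rule deg_blocksum) (use deg_sq_sum[of "V i" "V i" for i] V in \<open>auto simp: power2_eq_square is_form_matrix_def is_form_def\<close>)
qed

lemma fI_line:
  assumes V: "is_form_matrix d m r V"
  shows "(\<lambda>t. fI ip m r a p (line_pt u V t)) = poly
    [:ip (E0f m r a p u) (E0f m r a p u), 2 * ip (E0f m r a p u) (E1f m r a u V),
      ip (E1f m r a u V) (E1f m r a u V) + 2 * ip (E0f m r a p u) (E2f m r a V),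
      2 * ip (E1f m r a u V) (E2f m r a V), ip (E2f m r a V) (E2f m r a V):]"
proof
  fix t
  let ?R = "E0f m r a p u + smult t (E1f m r a u V) + smult (t^2) (E2f m r a V)"
  have dR: "degree ?R \<le> 2 * d + k"
    using dE0 dE1[OF V] dE2[OF V] degree_smult_le
    by (meson degree_add_le le_trans)
  have "fI ip m r a p (line_pt u V t) = (sqrt (ip ?R ?R))^2"
    unfolding fI_def ip_norm_def resid ..
  also have "\<dots> = ip ?R ?R" using ip_nonneg[OF IPa dR] by simp
  finally show "fI ip m r a p (line_pt u V t) = poly
    [:ip (E0f m r a p u) (E0f m r a p u), 2 * ip (E0f m r a p u) (E1f m r a u V),
      ip (E1f m r a u V) (E1f m r a u V) + 2 * ip (E0f m r a p u) (E2f m r a V),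
      2 * ip (E1f m r a u V) (E2f m r a V), ip (E2f m r a V) (E2f m r a V):] t"
    using ip_quad[OF IPa dE0 dE1[OF V] dE2[OF V], of t] by simp
qed

lemma line_facts:
  assumes V: "is_form_matrix d m r V"
  shows "ip (E0f m r a p u) (E1f m r a u V) = 0"
    and "ip (E1f m r a u V) (E1f m r a u V) + 2 * ip (E0f m r a p u) (E2f m r a V) \<ge> 0"
proof -
  have g: "deriv (\<lambda>t. fI ip m r a p (line_pt u V t)) 0 = 0" using grad V by blast
  have h: "deriv (deriv (\<lambda>t. fI ip m r a p (line_pt u V t))) 0 \<ge> 0" using hess V by blast
  from g show "ip (E0f m r a p u) (E1f m r a u V) = 0"
    unfolding fI_line[OF V] deriv_poly_fun' by (simp add: poly_0_coeff_0 coeff_pderiv)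
  from h show "ip (E1f m r a u V) (E1f m r a u V) + 2 * ip (E0f m r a p u) (E2f m r a V) \<ge> 0"
    unfolding fI_line[OF V] deriv_poly_fun' by (simp add: poly_0_coeff_0 coeff_pderiv)
qed


definition psi :: "nat \<Rightarrow> real poly \<Rightarrow> real" where
  "psi i f = ip (E0f m r a p u) (a i * rv (2 * d) (rv (2 * d) f))"

lemma psi_eq: "degree f \<le> 2 * d \<Longrightarrow> psi i f = ip (E0f m r a p u) (a i * f)"
  unfolding psi_def by (simp add: rv_rv)

lemma psi_lin: "i < m \<Longrightarrow> linf (psi i)"
proof -
  assume im: "i < m"
  have dx: "degree (a i * rv (2 * d) x) \<le> 2 * d + k" for x
    using degree_mult_le[of "a i" "rv (2 * d) x"] degree_rv[of "2 * d" x] dak[OF im] by simp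
  show ?thesis unfolding linf_def psi_def
    by (simp add: rv_add rv_smult distrib_left ip_addR[OF IPa dx dx dE0] ip_smultR[OF IPa dx dE0])
qed

lemma blockG:
  assumes im: "i < m" and jr: "j < r" and dw: "degree w \<le> d"
  shows "psi i (u i j * w) = 0"
proof -
  define W where "W = (\<lambda>j'::nat. if j' = j then w else (0 :: real poly))"
  have Wd: "degree (W j') \<le> d" for j' unfolding W_def using dw by auto
  have "(\<Sum>j'<r. smult 2 (u i j' * W j')) = (\<Sum>j'<r. if j' = j then smult 2 (u i j * w) else 0)"
    unfolding W_def by (rule sum.cong) auto
  also have "\<dots> = smult 2 (u i j * w)" using jr by simp
  finally have "E1f m r a u (Vblk i W) = smult 2 (a i * (u i j * w))"
    using E1_blk[OF im] by simp
  then have "ip (E0f m r a p u) (smult 2 (a i * (u i j * w))) = 0"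
    using line_facts(1)[OF Vblk_form[where W=W and i=i, OF Wd]] by simp
  moreover have "degree (a i * (u i j * w)) \<le> 2 * d + k"
    using degree_mult_le[of "a i" "u i j * w"] degree_mult_le[of "u i j" w] dak[OF im] dum[OF im jr] dw by simp
  ultimately have "ip (E0f m r a p u) (a i * (u i j * w)) = 0"
    using ip_smultR[OF IPa _ dE0] by simp
  moreover have "degree (u i j * w) \<le> 2 * d"
    using degree_mult_le[of "u i j" w] dum[OF im jr] dw by simp
  ultimately show ?thesis using psi_eq by simp
qed

lemma sq_expand: "(smult l v + w)^2 = w^2 + smult (2 * l) (v * w) + smult (l^2) (v^2 :: real poly)"
  using sq_line[of w l v] by (simp add: algebra_simps)

lemma blockH:
  assumes im: "i < m" and dv1: "degree v1 \<le> d" and dv2: "degree v2 \<le> d"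
    and dw1: "degree w1 \<le> d" and dw2: "degree w2 \<le> d"
    and ker: "u i 0 * v1 + u i 1 * v2 = 0"
  shows "ip (a i * smult 2 (u i 0 * w1 + u i 1 * w2)) (a i * smult 2 (u i 0 * w1 + u i 1 * w2))
     + 2 * (psi i (w1^2 + w2^2) + 2 * l * psi i (v1 * w1 + v2 * w2) + l^2 * psi i (v1^2 + v2^2)) \<ge> 0"
proof -
  define W where "W = (\<lambda>j::nat. if j = 0 then smult l v1 + w1 else if j = 1 then smult l v2 + w2 else (0 :: real poly))"
  have dsl: "degree (smult l v + w) \<le> d" if "degree v \<le> d" "degree w \<le> d" for v w
    using degree_smult_le[of l v] that degree_add_le by (meson le_trans)
  have Wd: "degree (W j) \<le> d" for j unfolding W_def using dsl dv1 dv2 dw1 dw2 by auto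
  have "(\<Sum>j<r. smult 2 (u i j * W j)) = smult 2 (u i 0 * W 0) + smult 2 (u i 1 * W 1)"
    by (rule sum_two[OF r2]) (simp add: W_def)
  also have "\<dots> = smult 2 (u i 0 * w1 + u i 1 * w2) + smult (2 * l) (u i 0 * v1 + u i 1 * v2)"
    by (simp add: W_def algebra_simps smult_add_right)
  also have "\<dots> = smult 2 (u i 0 * w1 + u i 1 * w2)" using ker by simp
  finally have E1: "E1f m r a u (Vblk i W) = a i * smult 2 (u i 0 * w1 + u i 1 * w2)"
    using E1_blk[OF im] by simp
  have "(\<Sum>j<r. (W j)^2) = (W 0)^2 + (W 1)^2"
    by (rule sum_two[OF r2]) (simp add: W_def)
  then have E2: "E2f m r a (Vblk i W) = a i * ((W 0)^2 + (W 1)^2)"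
    using E2_blk[OF im] by simp
  have dW2: "degree ((W 0)^2 + (W 1)^2) \<le> 2 * d"
    using degree_power_le[of "W 0" 2] degree_power_le[of "W 1" 2] Wd[of 0] Wd[of 1] degree_add_le
    by (metis (no_types, lifting) le_trans mult.commute mult_le_mono2)
  have "ip (E0f m r a p u) (E2f m r a (Vblk i W)) = psi i ((W 0)^2 + (W 1)^2)"
    unfolding E2 using psi_eq[OF dW2] by simp
  also have "(W 0)^2 + (W 1)^2 = (w1^2 + w2^2) + smult (2 * l) (v1 * w1 + v2 * w2) + smult (l^2) (v1^2 + v2^2)"
  proof -
    have W01: "W 0 = smult l v1 + w1" "W 1 = smult l v2 + w2" unfolding W_def by simp_all
    show ?thesis unfolding W01 sq_expand by (simp add: algebra_simps smult_add_right)
  qed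
  also have "psi i \<dots> = psi i (w1^2 + w2^2) + 2 * l * psi i (v1 * w1 + v2 * w2) + l^2 * psi i (v1^2 + v2^2)"
    using psi_lin[OF im] by (simp add: linf_add linf_smult)
  finally show ?thesis using line_facts(2)[OF Vblk_form[where W=W and i=i, OF Wd]] E1 by simp
qed


lemma psi_sq: "i < m \<Longrightarrow> degree s \<le> d \<Longrightarrow> psi i (s^2) \<ge> 0"
proof -
  assume im: "i < m" and ds: "degree s \<le> d"
  have r0: "0 < r" "1 < r" using r2 by auto
  have lin: "linf (psi i)" using psi_lin[OF im] .
  show ?thesis
  proof (rule core_gen[OF lin dum[OF im r0(1)] dum[OF im r0(2)] _ _ _ _ ds])
    show "psi i (u i 0 * w) = 0" if "degree w \<le> d" for w using blockG[OF im r0(1) that] .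
    show "psi i (u i 1 * w) = 0" if "degree w \<le> d" for w using blockG[OF im r0(2) that] .
    show "psi i (v1^2 + v2^2) \<ge> 0" if "degree v1 \<le> d" "degree v2 \<le> d" "u i 0 * v1 + u i 1 * v2 = 0" for v1 v2
    proof -
      have "degree (0::real poly) \<le> d" by simp
      from blockH[OF im that(1,2) this this that(3), of 1] show ?thesis
        using ip_zeroL[OF IPa, of 0] by (simp add: linf_0[OF lin])
    qed
    show "psi i (v1 * w1 + v2 * w2) = 0" if "degree v1 \<le> d" "degree v2 \<le> d" "degree w1 \<le> d" "degree w2 \<le> d"
      "u i 0 * v1 + u i 1 * v2 = 0" "psi i (v1^2 + v2^2) = 0" for v1 v2 w1 w2
    proof (rule ccontr)
      define B where "B = psi i (v1 * w1 + v2 * w2)"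
      define K where "K = ip (a i * smult 2 (u i 0 * w1 + u i 1 * w2)) (a i * smult 2 (u i 0 * w1 + u i 1 * w2))
          + 2 * psi i (w1^2 + w2^2)"
      assume "psi i (v1 * w1 + v2 * w2) \<noteq> 0"
      then have Bnz: "B \<noteq> 0" unfolding B_def .
      have all: "K + 4 * l * B \<ge> 0" for l
        using blockH[OF im that(1-5), of l] that(6) unfolding K_def B_def by (simp add: algebra_simps)
      define l where "l = - (\<bar>K\<bar> + 1) / (4 * B)"
      have "4 * l * B = - (\<bar>K\<bar> + 1)" unfolding l_def using Bnz by simp
      then have "K + 4 * l * B < 0" by simp
      then show False using all[of l] by simp
    qed
  qed
qed

lemma psi_q: "i < m \<Longrightarrow> psi i (q i) \<ge> 0"
proof -
  assume im: "i < m"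
  obtain gs where gs: "\<forall>g\<in>set gs. degree g \<le> d" "q i = sum_list (map (\<lambda>g. g^2) gs)"
    using qs im unfolding sos_form_def is_form_def by blast
  have "psi i (sum_list (map (\<lambda>g. g^2) gs)) \<ge> 0" using gs(1)
  proof (induction gs)
    case Nil
    then show ?case using linf_0[OF psi_lin[OF im]] by simp
  next
    case (Cons g gs)
    then show ?case using psi_sq[OF im, of g] linf_add[OF psi_lin[OF im]] by simp
  qed
  then show ?thesis using gs by simp
qed

lemma final: "fI ip m r a p u = 0"
proof -
  define E0 where "E0 = E0f m r a p u"
  define S where "S = (\<Sum>i<m. a i * (\<Sum>j<r. (u i j)^2))"
  have dS': "degree (\<Sum>j<r. (u i j)^2) \<le> 2 * d" if "i < m" for i
    using deg_sq_sum[of "u i" "u i"] dum[OF that] by (simp add: power2_eq_square)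
  have dai: "degree (a i * X) \<le> 2 * d + k" if "i < m" "degree X \<le> 2 * d" for i X
    using degree_mult_le[of "a i" X] dak[OF that(1)] that(2) by simp
  have dS: "degree S \<le> 2 * d + k" unfolding S_def by (rule deg_blocksum) (use dS' in auto)
  have dE: "degree E0 \<le> 2 * d + k" unfolding E0_def by (rule dE0)
  have E0e: "E0 = S - p" unfolding E0_def E0f_def S_def ..
  have "ip E0 E0 = ip E0 S - ip E0 p" unfolding E0e[symmetric, THEN sym] 
    using ip_diffR[OF IPa dS dp] dE unfolding E0e by simp
  also have "ip E0 S = (\<Sum>i<m. ip E0 (a i * (\<Sum>j<r. (u i j)^2)))"
    unfolding S_def by (rule ip_sumR[OF IPa]) (use dai dS' dE in auto)
  also have "\<dots> = (\<Sum>i<m. psi i (\<Sum>j<r. (u i j)^2))"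
    by (rule sum.cong) (auto simp: psi_eq dS' E0_def)
  also have "\<dots> = 0"
  proof (rule sum.neutral, rule ballI)
    fix i assume "i \<in> {..<m}"
    then have im: "i < m" by simp
    have "psi i (\<Sum>j<r. (u i j)^2) = (\<Sum>j<r. psi i (u i j * u i j))"
      using linf_sum[OF psi_lin[OF im]] by (simp add: power2_eq_square)
    also have "\<dots> = 0" using blockG[OF im _ dum[OF im]] by simp
    finally show "psi i (\<Sum>j<r. (u i j)^2) = 0" .
  qed
  also have "ip E0 p = (\<Sum>i<m. ip E0 (a i * q i))"
    unfolding pdef by (rule ip_sumR[OF IPa]) (use dai qs sos_deg dE in auto)
  also have "\<dots> = (\<Sum>i<m. psi i (q i))"
    by (rule sum.cong) (use qs sos_deg in \<open>auto simp: psi_eq E0_def\<close>)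
  finally have "ip E0 E0 = - (\<Sum>i<m. psi i (q i))" by simp
  moreover have "(\<Sum>i<m. psi i (q i)) \<ge> 0" by (rule sum_nonneg) (use psi_q in auto)
  ultimately have "ip E0 E0 \<le> 0" by simp
  then have "ip E0 E0 = 0" using ip_nonneg[OF IPa dE] by simp
  then show ?thesis unfolding fI_def ip_norm_def E0_def E0f_def by simp
qed

end

theorem corollary6p2:
  fixes r m d k :: nat
    and a q :: "nat \<Rightarrow> real poly"
    and p :: "real poly"
    and ip :: "real poly \<Rightarrow> real poly \<Rightarrow> real"
    and u :: "nat \<Rightarrow> nat \<Rightarrow> real poly"
  assumes "r \<ge> 2" and "m \<ge> 1"
    and "\<forall>i<m. is_form k (a i)"
    and "\<forall>i<m. sos_form d (q i)"
    and "p = (\<Sum>i<m. a i * q i)"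
    and "is_inner_product_on_forms (2 * d + k) ip"
    and "is_form_matrix d m r u"
    and grad: "\<forall>v. is_form_matrix d m r v \<longrightarrow>
                 deriv (\<lambda>t. fI ip m r a p (line_pt u v t)) 0 = 0"
    and hess: "\<forall>v. is_form_matrix d m r v \<longrightarrow>
                 deriv (deriv (\<lambda>t. fI ip m r a p (line_pt u v t))) 0 \<ge> 0"
  shows "fI ip m r a p u = 0"
  by (rule final[OF assms(1) assms(3) assms(4) assms(5) assms(6) assms(7) grad hess])

end
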